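(* Let $h\in\mathbb N$ and let $W:\mathbb Z\to\mathbb R$ be the even function given for $a\ge0$ by $W(a)=2h-3a$ if $0\le a\le h$, $W(a)=a-2h$ if $h\le a\le 2h$, and $W(a)=0$ if $a>2h$. Then for all $q\in\mathbb N$, $\beta\in\mathbb R\setminus\mathbb Z$, $\ell\in\mathbb N$, $\alpha\in\mathbb R$: $$\sum_{\substack{a\in\mathbb Z\\ a\equiv0\ (\mathrm{mod}\ q)}}W(a)=2q\left\|\frac hq\right\|,\qquad \sum_{|a|\le 2h}W(a)e(a\beta)=\frac{4\sin^4(\pi h\beta)}{\sin^2(\pi\beta)},\qquad \sum_{b\in\mathbb Z}W(\ell b)e(b\alpha)\ge0.$$ Moreover, writing $E_X(\beta)=\sum_{a\in\mathbb Z,\,|a|\le X}e(a\beta)$, $$\frac1\ell\sum_{a\in\mathbb Z}W(a\ell)e(a\beta)=\frac{4\sin^2\bigl(\pi\beta\lfloor h/\ell\rfloor\bigr)-\sin^2\bigl(\pi\beta\lfloor 2h/\ell\rfloor\bigr)}{\sin^2(\pi\beta)}+4\left\{\frac h\ell\right\}E_{h/\ell}(\beta)-\left\{\frac{2h}\ell\right\}E_{2h/\ell}(\beta)$$ $$=2\Bigl(1-\cos\bigl(2\pi\beta\lfloor h/\ell\rfloor\bigr)\Bigr)\sum_{|a|\le h/\ell}\Bigl(\lfloor h/\ell\rfloor-|a|\Bigr)e(a\beta)-\left(2\left\{\frac h\ell\right\}-\left\{\frac{2h}\ell\right\}\right)E_{2\lfloor h/\ell\rfloor}(\beta)+4\left\{\frac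 h\ell\right\}E_{h/\ell}(\beta)-\left\{\frac{2h}\ell\right\}E_{2h/\ell}(\beta).$$
   Context: $e(\theta)=e^{2\pi i\theta}$; $\|r\|=\min_{n\in\mathbb Z}|r-n|$ is the distance to the nearest integer; $\lfloor\cdot\rfloor$ and $\{\cdot\}$ denote integer and fractional parts. *)

theory Defs
  imports "HOL-Analysis.Analysis" "HOL-Library.Complex_Order"
begin

definition e :: "real \<Rightarrow> complex" where
  "e \<theta> = exp (2 * of_real pi * \<i> * of_real \<theta>)"

definition nint_dist :: "real \<Rightarrow> real" where
  "nint_dist r = (INF n::int. \<bar>r - of_int n\<bar>)"

definition W :: "nat \<Rightarrow> int \<Rightarrow> real" where
  "W h a = (let b = \<bar>a\<bar> in
     if b \<le> int h then 2 * real h - 3 * of_int b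
     else if b \<le> 2 * int h then of_int b - 2 * real h
     else 0)"

definition E :: "real \<Rightarrow> real \<Rightarrow> complex" where
  "E X \<beta> = (\<Sum>a\<in>{a::int. \<bar>of_int a\<bar> \<le> X}. e (of_int a * \<beta>))"

end

theory Submission
  imports Defs
begin


lemma e_cis: "e t = cis (2*pi*t)"
  unfolding e_def cis_conv_exp by (simp add: mult_ac)

lemma e_0[simp]: "e 0 = 1" by (simp add: e_cis)

lemma e_add: "e (x + y) = e x * e y"
  by (simp add: e_cis cis_mult distrib_left)

lemma e_plus_minus: "e x + e (-x) = of_real (2 * cos (2*pi*x))"
  by (simp add: e_cis cis.ctr complex_eq_iff)

definition Dk :: "int \<Rightarrow> real \<Rightarrow> complex" where
  "Dk N b = (\<Sum>a\<in>{-N..N}. e (of_int a * b))"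
definition Kf :: "int \<Rightarrow> real \<Rightarrow> complex" where
  "Kf N b = (\<Sum>a\<in>{-N..N}. of_int (N - \<bar>a\<bar>) * e (of_int a * b))"

lemma split_ival: "N \<ge> 0 \<Longrightarrow> {-(N+1)..N+1} = insert (-(N+1)) (insert (N+1) {-N..(N::int)})"
  by auto

lemma Dk_step: assumes "N \<ge> 0"
  shows "Dk (N+1) b = Dk N b + of_real (2 * cos (2*pi*(of_int (N+1)*b)))"
proof -
  have "Dk (N+1) b = e (of_int (-(N+1)) * b) + (e (of_int (N+1) * b) + Dk N b)"
    unfolding Dk_def split_ival[OF assms] using assms by (simp add: sum.insert)
  also have "\<dots> = Dk N b + (e (of_int (N+1)*b) + e (-(of_int (N+1)*b)))"
    by (simp add: algebra_simps)
  finally show ?thesis by (simp only: e_plus_minus)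
qed

lemma Kf_step: assumes "N \<ge> 0"
  shows "Kf (N+1) b = Kf N b + Dk N b"
proof -
  have "Kf (N+1) b = (\<Sum>a\<in>{-N..N}. of_int (N + 1 - \<bar>a\<bar>) * e (of_int a * b))"
    unfolding Kf_def split_ival[OF assms] using assms by (simp add: sum.insert)
  also have "\<dots> = (\<Sum>a\<in>{-N..N}. of_int (N - \<bar>a\<bar>) * e (of_int a * b) + e (of_int a * b))"
    by (rule sum.cong) (auto simp: algebra_simps)
  finally show ?thesis by (simp add: Kf_def Dk_def sum.distrib)
qed

lemma Dk_sin: assumes "N \<ge> 0"
  shows "Dk N b * of_real (sin (pi*b)) = of_real (sin ((2* of_int N+1)*pi*b))"
  using assms
proof (induction N rule: int_ge_induct)
  case base
  then show ?case by (simp add: Dk_def)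
next
  case (step i)
  have tr: "sin ((2* of_int i+1)*pi*b) + 2 * cos (2*pi*(of_int (i+1)*b)) * sin (pi*b)
        = sin ((2* of_int (i+1)+1)*pi*b)"
  proof -
    have A: "(2* of_int i+1)*pi*b = (2* of_int (i+1))*pi*b - pi*b" by (simp add: algebra_simps)
    have B: "(2* of_int (i+1)+1)*pi*b = (2* of_int (i+1))*pi*b + pi*b" by (simp add: algebra_simps)
    have C: "2*pi*(of_int (i+1)*b) = (2* of_int (i+1))*pi*b" by (simp add: algebra_simps)
    show ?thesis unfolding A B C sin_add sin_diff by (simp add: algebra_simps)
  qed
  have "Dk (i+1) b * of_real (sin (pi*b)) = Dk i b * of_real (sin (pi*b))
      + of_real (2 * cos (2*pi*(of_int (i+1)*b)) * sin (pi*b))"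
    using Dk_step[OF step(1)] by (simp add: distrib_right)
  also have "\<dots> = of_real (sin ((2* of_int i+1)*pi*b) + 2 * cos (2*pi*(of_int (i+1)*b)) * sin (pi*b))"
    using step(2) by simp
  finally show ?case by (simp only: tr)
qed

lemma sin_sq_step: "sin ((A::real) + x) ^ 2 = sin A ^ 2 + sin (2*A + x) * sin x"
proof -
  have "sin (2*A + x) = 2 * sin A * cos A * cos x + (cos A ^ 2 - sin A ^ 2) * sin x"
    by (simp add: sin_add sin_double cos_double)
  moreover have "sin (A + x) = sin A * cos x + cos A * sin x" by (simp add: sin_add)
  moreover have "cos A ^ 2 = 1 - sin A ^ 2" "cos x ^ 2 = 1 - sin x ^ 2"
    by (simp_all add: cos_squared_eq)
  ultimately show ?thesis by algebra
qed

lemma Kf_sin: assumes "N \<ge> 0"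
  shows "Kf N b * of_real (sin (pi*b) ^ 2) = of_real (sin (pi * b * of_int N) ^ 2)"
  using assms
proof (induction N rule: int_ge_induct)
  case base
  then show ?case by (simp add: Kf_def)
next
  case (step i)
  have "Kf (i+1) b * of_real (sin (pi*b) ^ 2) = Kf i b * of_real (sin (pi*b) ^ 2)
      + (Dk i b * of_real (sin (pi*b))) * of_real (sin (pi*b))"
    using Kf_step[OF step(1)] by (simp add: power2_eq_square algebra_simps)
  also have "\<dots> = of_real (sin (pi * b * of_int i) ^ 2 + sin ((2 * of_int i+1)*pi*b) * sin (pi*b))"
    using step(2) Dk_sin[OF step(1)] by simp
  also have "sin (pi * b * of_int i) ^ 2 + sin ((2 * of_int i+1)*pi*b) * sin (pi*b)
     = sin (pi * b * of_int i + pi * b) ^ 2"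
    by (subst sin_sq_step) (simp add: algebra_simps)
  finally show ?case by (simp add: algebra_simps)
qed

lemma Dk_0: "N \<ge> 0 \<Longrightarrow> Dk N 0 = of_int (2*N+1)"
  by (simp add: Dk_def)

lemma Kf_0: assumes "N \<ge> 0" shows "Kf N 0 = of_int (N^2)"
  using assms
proof (induction N rule: int_ge_induct)
  case base
  then show ?case by (simp add: Kf_def)
next
  case (step i)
  have "Kf (i+1) 0 = Kf i 0 + Dk i 0" by (rule Kf_step[OF step(1)])
  then show ?case using step by (simp add: Dk_0 power2_eq_square algebra_simps)
qed

lemma T_sum:
  fixes n l :: nat
  assumes l: "l \<ge> 1" and S: "finite S" "{-\<lfloor>real n / real l\<rfloor>..\<lfloor>real n / real l\<rfloor>} \<subseteq> S"
  shows "(\<Sum>a\<in>S. of_real (max 0 (real n - of_int \<bar>a\<bar> * real l)) * e (of_int a * b))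
    = of_real (real l) * (Kf \<lfloor>real n / real l\<rfloor> b
        + of_real (frac (real n / real l)) * Dk \<lfloor>real n / real l\<rfloor> b)"
proof -
  define X where "X = real n / real l"
  define N where "N = \<lfloor>X\<rfloor>"
  define f where "f = frac X"
  have XN: "X = of_int N + f" unfolding N_def f_def frac_def by simp
  have f01: "0 \<le> f" "f < 1" unfolding f_def by (auto simp: frac_lt_1)
  have nX: "real n = real l * X" using l unfolding X_def by simp
  have "(\<Sum>a\<in>S. of_real (max 0 (real n - of_int \<bar>a\<bar> * real l)) * e (of_int a * b))
     = (\<Sum>a\<in>{-N..N}. of_real (max 0 (real n - of_int \<bar>a\<bar> * real l)) * e (of_int a * b))"
  proof -
    have sub: "{-N..N} \<subseteq> S" using S(2) unfolding N_def X_def .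
    have z: "\<forall>i\<in>S - {-N..N}. complex_of_real (max 0 (real n - real_of_int \<bar>i\<bar> * real l)) * e (real_of_int i * b) = 0"
    proof
      fix i assume "i \<in> S - {-N..N}"
      then have "\<bar>i\<bar> \<ge> N + 1" by auto
      then have "of_int \<bar>i\<bar> \<ge> X" using XN f01 by linarith
      then have "real n \<le> of_int \<bar>i\<bar> * real l" using nX l
        by (simp add: mult.commute mult_right_mono)
      then show "complex_of_real (max 0 (real n - real_of_int \<bar>i\<bar> * real l)) * e (real_of_int i * b) = 0"
        by simp
    qed
    show ?thesis by (rule sum.mono_neutral_right[OF S(1) sub z])
  qed
  also have "\<dots> = (\<Sum>a\<in>{-N..N}. of_real (real l) * (of_int (N - \<bar>a\<bar>) * e (of_int a * b)
        + of_real f * e (of_int a * b)))"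
  proof (rule sum.cong[OF refl])
    fix a assume "a \<in> {-N..N}"
    then have "\<bar>a\<bar> \<le> N" by auto
    then have "real n - of_int \<bar>a\<bar> * real l = real l * (of_int (N - \<bar>a\<bar>) + f)"
      using nX XN by (simp add: algebra_simps)
    moreover have "real l * (of_int (N - \<bar>a\<bar>) + f) \<ge> 0" using \<open>\<bar>a\<bar> \<le> N\<close> f01 by simp
    moreover have "complex_of_int \<bar>a\<bar> = complex_of_real \<bar>real_of_int a\<bar>"
      by (metis of_int_abs of_real_of_int_eq)
    ultimately show "of_real (max 0 (real n - of_int \<bar>a\<bar> * real l)) * e (of_int a * b)
       = of_real (real l) * (of_int (N - \<bar>a\<bar>) * e (of_int a * b) + of_real f * e (of_int a * b))"
      by (simp add: algebra_simps)
  qed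
  also have "\<dots> = of_real (real l) * (Kf N b + of_real f * Dk N b)"
    unfolding Kf_def Dk_def by (simp only: sum.distrib flip: sum_distrib_left distrib_left)
  finally show ?thesis unfolding N_def f_def X_def .
qed

lemma W_alt: "W h a = 4 * max 0 (real h - of_int \<bar>a\<bar>) - max 0 (real (2*h) - of_int \<bar>a\<bar>)"
  unfolding W_def Let_def by auto

lemma W_zero: "\<bar>a\<bar> > 2 * int h \<Longrightarrow> W h a = 0"
  unfolding W_def Let_def by auto

lemma W_nz: "W h a \<noteq> 0 \<Longrightarrow> \<bar>a\<bar> \<le> 2 * int h"
  using W_zero by force

lemma infsum_fin:
  assumes "finite S" "\<And>x. x \<notin> S \<Longrightarrow> f x = 0"
  shows "infsum f UNIV = sum f S"
proof -
  have "infsum f UNIV = infsum f S"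
    by (rule infsum_cong_neutral) (use assms in auto)
  then show ?thesis using assms(1) by simp
qed

definition Q :: "nat \<Rightarrow> nat \<Rightarrow> real \<Rightarrow> complex" where
  "Q h l b = 4 * (Kf \<lfloor>real h / real l\<rfloor> b + of_real (frac (real h / real l)) * Dk \<lfloor>real h / real l\<rfloor> b)
     - (Kf \<lfloor>2 * real h / real l\<rfloor> b + of_real (frac (2 * real h / real l)) * Dk \<lfloor>2 * real h / real l\<rfloor> b)"

lemma Wsum:
  fixes l :: nat
  assumes l: "l \<ge> 1" and S: "finite S" "{-2 * int h..2 * int h} \<subseteq> S"
  shows "(\<Sum>a\<in>S. of_real (W h (a * int l)) * e (of_int a * b)) = of_real (real l) * Q h l b"
proof -
  have fl: "\<lfloor>real n / real l\<rfloor> \<le> int n" for n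
  proof -
    have "real l \<ge> 1" using l by simp
    then have "real n * 1 \<le> real n * real l" by (intro mult_left_mono) simp_all
    then have "real n / real l \<le> real n" using l by (simp add: divide_le_eq)
    then show ?thesis by linarith
  qed
  have s1: "{-\<lfloor>real h / real l\<rfloor>..\<lfloor>real h / real l\<rfloor>} \<subseteq> S"
    using fl[of h] S(2) by auto
  have s2: "{-\<lfloor>real (2*h) / real l\<rfloor>..\<lfloor>real (2*h) / real l\<rfloor>} \<subseteq> S"
    using fl[of "2*h"] S(2) by auto
  have Wl: "of_real (W h (a * int l)) * e (of_int a * b) =
      4 * (of_real (max 0 (real h - of_int \<bar>a\<bar> * real l)) * e (of_int a * b))
      - of_real (max 0 (real (2*h) - of_int \<bar>a\<bar> * real l)) * e (of_int a * b)" for a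
    unfolding W_alt by (simp add: abs_mult algebra_simps)
  show ?thesis
    unfolding Wl sum_subtractf sum_distrib_left[symmetric] T_sum[OF l S(1) s1] T_sum[OF l S(1) s2] Q_def
    by (simp add: algebra_simps)
qed

lemma infsum_W:
  fixes l :: nat
  assumes l: "l \<ge> 1"
  shows "(\<Sum>\<^sub>\<infinity>a::int. of_real (W h (a * int l)) * e (of_int a * b)) = of_real (real l) * Q h l b"
proof -
  have "(\<Sum>\<^sub>\<infinity>a::int. of_real (W h (a * int l)) * e (of_int a * b))
     = (\<Sum>a\<in>{-2 * int h..2 * int h}. of_real (W h (a * int l)) * e (of_int a * b))"
  proof (rule infsum_fin)
    fix a assume "a \<notin> {-2 * int h..2 * int h}"
    then have "\<bar>a\<bar> > 2 * int h" by auto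
    moreover have "\<bar>a\<bar> * 1 \<le> \<bar>a\<bar> * int l" using l by (intro mult_left_mono) simp_all
    then have "\<bar>a * int l\<bar> \<ge> \<bar>a\<bar>" by (simp add: abs_mult)
    ultimately show "of_real (W h (a * int l)) * e (of_int a * b) = 0" by (simp add: W_zero)
  qed simp
  then show ?thesis using Wsum[OF l] by simp
qed

lemma e_int: "t \<in> \<int> \<Longrightarrow> e t = 1"
  unfolding e_cis by (simp add: cis_multiple_2pi)

lemma Kf_int: "b \<in> \<int> \<Longrightarrow> Kf N b = Kf N 0"
  unfolding Kf_def by (intro sum.cong refl) (simp add: e_int)

lemma Q1_floor: "\<lfloor>real h / real (1::nat)\<rfloor> = int h" "frac (real h / real (1::nat)) = 0"
  "\<lfloor>2 * real h / real (1::nat)\<rfloor> = 2 * int h" "frac (2 * real h / real (1::nat)) = 0"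
proof -
  have "2 * real h = real (2 * h)" by simp
  then show "\<lfloor>real h / real (1::nat)\<rfloor> = int h" "frac (real h / real (1::nat)) = 0"
    "\<lfloor>2 * real h / real (1::nat)\<rfloor> = 2 * int h" "frac (2 * real h / real (1::nat)) = 0"
    by (simp_all only: of_nat_1 div_by_1 floor_of_nat frac_eq_0_iff Ints_of_nat)
qed

lemma Q1: "Q h 1 g = of_real (4 * sin (pi * real h * g) ^ 4 / sin (pi * g) ^ 2)"
proof (cases "sin (pi * g) = 0")
  case True
  then obtain i :: int where "pi * g = of_int i * pi" by (auto simp: sin_zero_iff_int2)
  then have "g = of_int i" by simp
  then have gi: "g \<in> \<int>" by simp
  show ?thesis unfolding Q_def Q1_floor using True
    by (simp add: Kf_int[OF gi] Kf_0 power2_eq_square algebra_simps)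
next
  case False
  define A where "A = pi * g * real h"
  have "Q h 1 g * of_real (sin (pi * g) ^ 2) = 4 * of_real (sin A ^ 2) - of_real (sin (2 * A) ^ 2)"
    unfolding Q_def Q1_floor A_def using Kf_sin[of "int h" g] Kf_sin[of "2 * int h" g]
    by (simp add: algebra_simps)
  moreover have "4 * sin A ^ 2 - sin (2 * A) ^ 2 = 4 * sin A ^ 4"
  proof -
    have "cos A ^ 2 = 1 - sin A ^ 2" by (simp add: cos_squared_eq)
    then show ?thesis by (simp add: sin_double power_mult_distrib) (simp add: power2_eq_square algebra_simps power4_eq_xxxx)
  qed
  ultimately have "Q h 1 g * of_real (sin (pi * g) ^ 2) = of_real (4 * sin A ^ 4)"
    by (metis of_real_diff of_real_mult of_real_numeral)
  then show ?thesis using False unfolding A_def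
    by (simp add: field_simps mult_ac)
qed

lemma e_pow: "e (real j * x) = e x ^ j"
proof -
  have "e x ^ j = cis (real j * (2*pi*x))" unfolding e_cis by (rule Complex.DeMoivre)
  then show ?thesis unfolding e_cis by (simp add: mult_ac)
qed

lemma e_eq_1: assumes "e t = 1" shows "t \<in> \<int>"
proof -
  have "cos (2*pi*t) = 1" using arg_cong[OF assms, of Re] by (simp add: e_cis)
  then obtain n :: int where "2*pi*t = of_int n * 2 * pi" by (auto simp: cos_one_2pi_int)
  then have "t = of_int n" by simp
  then show ?thesis by simp
qed

lemma root_sum:
  fixes l :: nat and a :: int
  assumes l: "l \<ge> 1"
  shows "(\<Sum>j<l. e (of_int a * real j / real l)) = (if int l dvd a then of_nat l else 0)"
proof -
  define z where "z = e (of_int a / real l)"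
  have zj: "e (of_int a * real j / real l) = z ^ j" for j
    unfolding z_def e_pow[symmetric] by (simp add: mult_ac)
  have zl: "z ^ l = 1" unfolding z_def e_pow[symmetric] using l by (simp add: e_int)
  show ?thesis
  proof (cases "int l dvd a")
    case True
    then obtain k where "a = int l * k" by (auto elim: dvdE)
    then have "z = 1" unfolding z_def using l by (simp add: e_int)
    then show ?thesis using True by (simp add: zj)
  next
    case False
    have "z \<noteq> 1"
    proof
      assume "z = 1"
      then have "of_int a / real l \<in> \<int>" unfolding z_def by (rule e_eq_1)
      then obtain k :: int where k: "of_int a / real l = of_int k" by (auto elim: Ints_cases)
      then have "of_int a = (of_int (int l * k) :: real)" using l by (simp add: field_simps)
      then have "a = int l * k" by linarith
      then show False using False by simp
    qed
    then show ?thesis using False by (simp add: zj geometric_sum zl)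
  qed
qed

lemma Q1_sum: "Q h 1 g = (\<Sum>a\<in>{-2 * int h..2 * int h}. of_real (W h a) * e (of_int a * g))"
  using Wsum[of 1 "{-2 * int h..2 * int h}" h g] by simp

lemma aliasing:
  fixes l :: nat
  assumes l: "l \<ge> 1"
  shows "(\<Sum>j<l. Q h 1 ((\<alpha> + real j) / real l)) = of_nat l * (of_nat l * Q h l \<alpha>)"
proof -
  define A where "A = {-2 * int h..2 * int h}"
  have fA: "finite A" unfolding A_def by simp
  have "(\<Sum>j<l. Q h 1 ((\<alpha> + real j) / real l))
      = (\<Sum>a\<in>A. of_real (W h a) * e (of_int a * \<alpha> / real l) * (\<Sum>j<l. e (of_int a * real j / real l)))"
    unfolding Q1_sum A_def[symmetric]
    by (subst sum.swap) (simp add: sum_distrib_left e_add[symmetric] add_divide_distrib algebra_simps)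
  also have "\<dots> = (\<Sum>a\<in>A. if int l dvd a then of_nat l * (of_real (W h a) * e (of_int a * \<alpha> / real l)) else 0)"
    by (rule sum.cong) (auto simp: root_sum[OF l] mult_ac)
  also have "\<dots> = of_nat l * (\<Sum>a\<in>{a\<in>A. int l dvd a}. of_real (W h a) * e (of_int a * \<alpha> / real l))"
    by (subst sum_distrib_left, subst sum.inter_filter[OF fA, symmetric]) (rule sum.cong, auto)
  also have "{a\<in>A. int l dvd a} = (\<lambda>b. b * int l) ` {b\<in>A. b * int l \<in> A}"
  proof -
    have ab: "\<bar>k\<bar> \<le> \<bar>k * int l\<bar>" for k
    proof -
      have "\<bar>k\<bar> * 1 \<le> \<bar>k\<bar> * int l" using l by (intro mult_left_mono) simp_all
      then show ?thesis by (simp add: abs_mult)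
    qed
    show ?thesis
    proof
      show "{a \<in> A. int l dvd a} \<subseteq> (\<lambda>b. b * int l) ` {b \<in> A. b * int l \<in> A}"
      proof
        fix a assume "a \<in> {a \<in> A. int l dvd a}"
        then have "a \<in> A" "int l dvd a" by auto
        then obtain k where "a = k * int l" by (metis dvdE mult.commute)
        note this \<open>a \<in> A\<close>
        moreover then have "k \<in> A" using ab[of k] unfolding A_def by auto
        ultimately show "a \<in> (\<lambda>b. b * int l) ` {b \<in> A. b * int l \<in> A}" by auto
      qed
    qed auto
  qed
  also have "(\<Sum>a\<in>(\<lambda>b. b * int l) ` {b\<in>A. b * int l \<in> A}. of_real (W h a) * e (of_int a * \<alpha> / real l))
      = (\<Sum>b\<in>{b\<in>A. b * int l \<in> A}. of_real (W h (b * int l)) * e (of_int b * \<alpha>))"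
    using l by (subst sum.reindex) (auto simp: inj_on_def)
  also have "\<dots> = (\<Sum>b\<in>A. of_real (W h (b * int l)) * e (of_int b * \<alpha>))"
    by (rule sum.mono_neutral_left) (auto simp: fA A_def abs_le_iff dest!: W_nz)
  also have "\<dots> = of_nat l * Q h l \<alpha>"
    using Wsum[OF l fA] unfolding A_def by simp
  finally show ?thesis .
qed


lemma Q_nonneg: "Q h 1 g \<ge> 0"
  unfolding Q1 by (simp add: less_eq_complex_def)

lemma Kf_div: assumes "sin (pi*b) \<noteq> 0" "N \<ge> 0"
  shows "Kf N b = of_real (sin (pi * b * of_int N) ^ 2 / sin (pi*b) ^ 2)"
proof -
  have "Kf N b * of_real (sin (pi*b) ^ 2) = of_real (sin (pi * b * of_int N) ^ 2)"
    by (rule Kf_sin[OF assms(2)])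
  then show ?thesis using assms(1) by (simp add: field_simps)
qed

lemma set_floor: "{a::int. \<bar>of_int a\<bar> \<le> X} = {-\<lfloor>X\<rfloor>..\<lfloor>X\<rfloor>}"
proof (rule set_eqI)
  fix a :: int
  have "\<bar>of_int a\<bar> \<le> X \<longleftrightarrow> \<bar>a\<bar> \<le> \<lfloor>X\<rfloor>"
    by (metis le_floor_iff of_int_abs)
  also have "\<dots> \<longleftrightarrow> a \<in> {-\<lfloor>X\<rfloor>..\<lfloor>X\<rfloor>}" by (simp only: atLeastAtMost_iff abs_le_iff) linarith
  finally show "a \<in> {a::int. \<bar>of_int a\<bar> \<le> X} \<longleftrightarrow> a \<in> {-\<lfloor>X\<rfloor>..\<lfloor>X\<rfloor>}" by simp
qed

lemma E_Dk: "E X b = Dk \<lfloor>X\<rfloor> b"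
  unfolding E_def Dk_def set_floor ..

lemma dbl: "\<lfloor>2 * x\<rfloor> = 2 * \<lfloor>x\<rfloor> + (if frac x < 1/2 then 0 else 1)"
  "frac (2 * x) = 2 * frac x - (if frac x < 1/2 then 0 else 1)"
proof -
  obtain N fx where N: "N = \<lfloor>x\<rfloor>" and fx: "fx = frac x" by blast
  have x: "x = of_int N + fx" unfolding N fx by (simp add: frac_def)
  have f: "0 \<le> fx" "fx < 1" unfolding fx by (simp_all add: frac_lt_1)
  show A: "\<lfloor>2 * x\<rfloor> = 2 * \<lfloor>x\<rfloor> + (if frac x < 1/2 then 0 else 1)"
    unfolding N[symmetric] fx[symmetric]
    by (rule floor_unique) (cases "fx < 1/2"; use x f in simp)+
  show "frac (2 * x) = 2 * frac x - (if frac x < 1/2 then 0 else 1)"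
    unfolding frac_def[of "2*x"] A N[symmetric] fx[symmetric]
    by (cases "fx < 1/2"; use x in simp)
qed

lemma nint_dist_eq: "nint_dist r = min (frac r) (1 - frac r)"
  unfolding nint_dist_def
proof (rule cInf_eq_minimum)
  obtain N fx where N: "N = \<lfloor>r\<rfloor>" and fx: "fx = frac r" by blast
  have x: "r = of_int N + fx" unfolding N fx by (simp add: frac_def)
  have f: "0 \<le> fx" "fx < 1" unfolding fx by (simp_all add: frac_lt_1)
  show "min (frac r) (1 - frac r) \<in> range (\<lambda>n::int. \<bar>r - of_int n\<bar>)"
  proof (cases "fx \<le> 1 - fx")
    case True
    then have "min (frac r) (1 - frac r) = \<bar>r - of_int N\<bar>" using x f unfolding fx[symmetric] by simp
    then show ?thesis by blast
  next
    case False
    then have "min (frac r) (1 - frac r) = \<bar>r - of_int (N + 1)\<bar>" using x f unfolding fx[symmetric] by simp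
    then show ?thesis by blast
  qed
  fix y assume "y \<in> range (\<lambda>n::int. \<bar>r - of_int n\<bar>)"
  then obtain n :: int where y: "y = \<bar>r - of_int n\<bar>" by auto
  show "min (frac r) (1 - frac r) \<le> y"
  proof (cases "n \<le> N")
    case True
    then have "of_int n \<le> (of_int N :: real)" by simp
    then show ?thesis using x f y unfolding fx[symmetric] by simp
  next
    case False
    then have "of_int n \<ge> (of_int N + 1 :: real)" by simp
    then show ?thesis using x f y unfolding fx[symmetric] by simp
  qed
qed

lemma mult_sum:
  fixes l :: nat
  assumes l: "l \<ge> 1"
  shows "(\<Sum>a\<in>{a\<in>{-2 * int h..2 * int h}. int l dvd a}. of_real (W h a) * e (of_int a * \<alpha> / real l))
     = of_nat l * Q h l \<alpha>"
proof -
  define A where "A = {-2 * int h..2 * int h}"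
  have fA: "finite A" unfolding A_def by simp
  have "{a\<in>A. int l dvd a} = (\<lambda>b. b * int l) ` {b\<in>A. b * int l \<in> A}"
  proof -
    have ab: "\<bar>k\<bar> \<le> \<bar>k * int l\<bar>" for k
    proof -
      have "\<bar>k\<bar> * 1 \<le> \<bar>k\<bar> * int l" using l by (intro mult_left_mono) simp_all
      then show ?thesis by (simp add: abs_mult)
    qed
    show ?thesis
    proof
      show "{a \<in> A. int l dvd a} \<subseteq> (\<lambda>b. b * int l) ` {b \<in> A. b * int l \<in> A}"
      proof
        fix a assume "a \<in> {a \<in> A. int l dvd a}"
        then have "a \<in> A" "int l dvd a" by auto
        then obtain k where "a = k * int l" by (metis dvdE mult.commute)
        note this \<open>a \<in> A\<close>
        moreover then have "k \<in> A" using ab[of k] unfolding A_def by auto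
        ultimately show "a \<in> (\<lambda>b. b * int l) ` {b \<in> A. b * int l \<in> A}" by auto
      qed
    qed auto
  qed
  then have "(\<Sum>a\<in>{a\<in>A. int l dvd a}. of_real (W h a) * e (of_int a * \<alpha> / real l))
     = (\<Sum>a\<in>(\<lambda>b. b * int l) ` {b\<in>A. b * int l \<in> A}. of_real (W h a) * e (of_int a * \<alpha> / real l))"
    by simp
  also have "\<dots> = (\<Sum>b\<in>{b\<in>A. b * int l \<in> A}. of_real (W h (b * int l)) * e (of_int b * \<alpha>))"
    using l by (subst sum.reindex) (auto simp: inj_on_def)
  also have "\<dots> = (\<Sum>b\<in>A. of_real (W h (b * int l)) * e (of_int b * \<alpha>))"
    by (rule sum.mono_neutral_left) (auto simp: fA A_def abs_le_iff dest!: W_nz)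
  also have "\<dots> = of_nat l * Q h l \<alpha>"
    using Wsum[OF l fA] unfolding A_def by simp
  finally show ?thesis unfolding A_def .
qed



lemma part1:
  fixes h :: nat
  shows "(\<forall>q::nat. q \<ge> 1 \<longrightarrow>
      (\<Sum>\<^sub>\<infinity>a\<in>{a::int. int q dvd a}. W h a) = 2 * real q * nint_dist (real h / real q))"
proof (intro allI impI)

  fix q :: nat assume q: "q \<ge> 1"
  define A where "A = {-2 * int h..2 * int h}"
  have fA: "finite A" unfolding A_def by simp
  have "(\<Sum>\<^sub>\<infinity>a\<in>{a::int. int q dvd a}. W h a) = (\<Sum>\<^sub>\<infinity>a\<in>{a\<in>A. int q dvd a}. W h a)"
  proof (rule infsum_cong_neutral)
    fix x assume "x \<in> {a::int. int q dvd a} - {a\<in>A. int q dvd a}"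
    then have "x \<notin> A" by auto
    then have "\<bar>x\<bar> > 2 * int h" unfolding A_def by auto
    then show "W h x = 0" by (rule W_zero)
  qed auto
  also have "\<dots> = (\<Sum>a\<in>{a\<in>A. int q dvd a}. W h a)" using fA by simp
  finally have S1: "(\<Sum>\<^sub>\<infinity>a\<in>{a::int. int q dvd a}. W h a) = (\<Sum>a\<in>{a\<in>A. int q dvd a}. W h a)" .
  define X where "X = real h / real q"
  define N where "N = \<lfloor>X\<rfloor>"
  define f where "f = frac X"
  define d :: int where "d = (if f < 1/2 then 0 else 1)"
  have X2: "2 * real h / real q = 2 * X" unfolding X_def by simp
  have N0: "N \<ge> 0" unfolding N_def X_def by simp
  have M: "\<lfloor>2 * real h / real q\<rfloor> = 2 * N + d"
    unfolding X2 dbl N_def f_def d_def by simp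
  have g: "frac (2 * real h / real q) = 2 * f - of_int d"
    unfolding X2 dbl f_def d_def by simp
  have M0: "2 * N + d \<ge> 0" using N0 by (simp add: d_def)
  define B where "B = 4 * (of_int (N^2) + f * of_int (2*N+1))
        - (of_int ((2 * N + d)^2) + (2 * f - of_int d) * of_int (2 * (2 * N + d) + 1))"
  have QB: "Q h q 0 = complex_of_real B"
  proof -
    have "Q h q 0 = 4 * (Kf N 0 + of_real f * Dk N 0) - (Kf (2 * N + d) 0 + of_real (2 * f - of_int d) * Dk (2 * N + d) 0)"
      unfolding Q_def M g X_def[symmetric] N_def[symmetric] f_def[symmetric] ..
    also have "\<dots> = complex_of_real B"
      unfolding Kf_0[OF N0] Kf_0[OF M0] Dk_0[OF N0] Dk_0[OF M0] B_def by simp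
    finally show ?thesis .
  qed
  have "complex_of_real (\<Sum>a\<in>{a\<in>A. int q dvd a}. W h a)
      = (\<Sum>a\<in>{a\<in>A. int q dvd a}. of_real (W h a) * e (of_int a * 0 / real q))" by simp
  also have "\<dots> = of_nat q * Q h q 0" unfolding A_def by (rule mult_sum[OF q])
  also have "\<dots> = complex_of_real (real q * B)" unfolding QB by simp
  finally have S2: "(\<Sum>a\<in>{a\<in>A. int q dvd a}. W h a) = real q * B"
    by (simp only: of_real_eq_iff)
  have nd: "nint_dist (real h / real q) = min f (1 - f)"
    unfolding nint_dist_eq X_def[symmetric] f_def ..
  have f01: "0 \<le> f" "f < 1" unfolding f_def by (simp_all add: frac_lt_1)
  have V: "B = 2 * min f (1 - f)"
  proof (cases "f < 1/2")
    case True
    then have "d = 0" "min f (1 - f) = f" unfolding d_def by auto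
    then show ?thesis unfolding B_def by (simp add: power2_eq_square algebra_simps)
  next
    case False
    then have "d = 1" "min f (1 - f) = 1 - f" unfolding d_def by auto
    then show ?thesis unfolding B_def by (simp add: power2_eq_square algebra_simps)
  qed
  show "(\<Sum>\<^sub>\<infinity>a\<in>{a::int. int q dvd a}. W h a) = 2 * real q * nint_dist (real h / real q)"
    unfolding S1 S2 nd V by simp
qed



lemma part2:
  fixes h :: nat
  shows "(\<forall>\<beta>::real. \<beta> \<notin> \<int> \<longrightarrow>
      (\<Sum>a\<in>{a::int. \<bar>a\<bar> \<le> 2 * int h}. of_real (W h a) * e (of_int a * \<beta>))
        = of_real (4 * sin (pi * real h * \<beta>) ^ 4 / sin (pi * \<beta>) ^ 2))"
proof (intro allI impI)
  fix \<beta> :: real assume "\<beta> \<notin> \<int>"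
  have "{a::int. \<bar>a\<bar> \<le> 2 * int h} = {-2 * int h..2 * int h}" by (auto simp: abs_le_iff)
  then show "(\<Sum>a\<in>{a::int. \<bar>a\<bar> \<le> 2 * int h}. of_real (W h a) * e (of_int a * \<beta>))
        = of_real (4 * sin (pi * real h * \<beta>) ^ 4 / sin (pi * \<beta>) ^ 2)"
    using Q1_sum[of h \<beta>] Q1[of h \<beta>] by simp
qed



lemma part3:
  fixes h :: nat
  shows "(\<forall>(l::nat) (\<alpha>::real). l \<ge> 1 \<longrightarrow>
      (\<Sum>\<^sub>\<infinity>b::int. of_real (W h (int l * b)) * e (of_int b * \<alpha>)) \<ge> 0)"
proof (intro allI impI)
  fix l :: nat and \<alpha> :: real assume l: "l \<ge> 1"
  have I: "(\<Sum>\<^sub>\<infinity>b::int. of_real (W h (int l * b)) * e (of_int b * \<alpha>)) = of_nat l * Q h l \<alpha>"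
    using infsum_W[OF l, of h \<alpha>] by (simp add: mult.commute)
  have "0 \<le> of_nat l * (of_nat l * Q h l \<alpha>)"
    unfolding aliasing[OF l, symmetric] by (intro sum_nonneg Q_nonneg)
  moreover have "real l > 0" using l by simp
  ultimately have "0 \<le> of_nat l * Q h l \<alpha>"
    by (auto simp: less_eq_complex_def zero_le_mult_iff)
  then show "(\<Sum>\<^sub>\<infinity>b::int. of_real (W h (int l * b)) * e (of_int b * \<alpha>)) \<ge> 0" unfolding I .
qed



lemma part4:
  fixes h :: nat
  shows "(\<forall>(l::nat) (\<beta>::real). l \<ge> 1 \<and> \<beta> \<notin> \<int> \<longrightarrow>
      (let N = \<lfloor>real h / real l\<rfloor>;
           M = \<lfloor>2 * real h / real l\<rfloor>;
           tail = of_real (4 * frac (real h / real l)) * E (real h / real l) \<beta>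
                  - of_real (frac (2 * real h / real l)) * E (2 * real h / real l) \<beta>;
           lhs = of_real (1 / real l) *
                   (\<Sum>\<^sub>\<infinity>a::int. of_real (W h (a * int l)) * e (of_int a * \<beta>));
           rhs1 = of_real ((4 * sin (pi * \<beta> * of_int N) ^ 2 - sin (pi * \<beta> * of_int M) ^ 2)
                           / sin (pi * \<beta>) ^ 2) + tail;
           rhs2 = of_real (2 * (1 - cos (2 * pi * \<beta> * of_int N))) *
                    (\<Sum>a\<in>{a::int. \<bar>of_int a\<bar> \<le> real h / real l}.
                        of_int (N - \<bar>a\<bar>) * e (of_int a * \<beta>))
                  - of_real (2 * frac (real h / real l) - frac (2 * real h / real l))
                      * E (of_int (2 * N)) \<beta>
                  + tail
       in lhs = rhs1 \<and> rhs1 = rhs2))"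
proof (intro allI impI)
  fix l :: nat and \<beta> :: real assume lb: "l \<ge> 1 \<and> \<beta> \<notin> \<int>"
  then have l: "l \<ge> 1" and b: "\<beta> \<notin> \<int>" by auto
  have s: "sin (pi * \<beta>) \<noteq> 0"
  proof
    assume "sin (pi * \<beta>) = 0"
    then obtain i :: int where "pi * \<beta> = of_int i * pi" by (auto simp: sin_zero_iff_int2)
    then have "\<beta> = of_int i" by simp
    then show False using b by simp
  qed
  define X where "X = real h / real l"
  define N where "N = \<lfloor>X\<rfloor>"
  define f where "f = frac X"
  define d :: int where "d = (if f < 1/2 then 0 else 1)"
  have X2: "2 * real h / real l = 2 * X" unfolding X_def by simp
  have N0: "N \<ge> 0" unfolding N_def X_def by simp
  have M: "\<lfloor>2 * real h / real l\<rfloor> = 2 * N + d"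
    unfolding X2 dbl N_def f_def d_def by simp
  have g: "frac (2 * real h / real l) = 2 * f - of_int d"
    unfolding X2 dbl f_def d_def by simp
  have M0: "2 * N + d \<ge> 0" using N0 by (simp add: d_def)
  have lhs: "of_real (1 / real l) * (\<Sum>\<^sub>\<infinity>a::int. of_real (W h (a * int l)) * e (of_int a * \<beta>)) = Q h l \<beta>"
    unfolding infsum_W[OF l] using l by simp
  have Qe: "Q h l \<beta> = 4 * Kf N \<beta> - Kf (2 * N + d) \<beta>
     + (of_real (4 * f) * Dk N \<beta> - of_real (2 * f - of_int d) * Dk (2 * N + d) \<beta>)"
    unfolding Q_def M g X_def[symmetric] N_def[symmetric] f_def[symmetric] by (simp add: algebra_simps)
  have K1: "of_real ((4 * sin (pi * \<beta> * of_int N) ^ 2 - sin (pi * \<beta> * of_int (2 * N + d)) ^ 2)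
      / sin (pi * \<beta>) ^ 2) = 4 * Kf N \<beta> - Kf (2 * N + d) \<beta>"
    unfolding Kf_div[OF s N0] Kf_div[OF s M0] by (simp add: diff_divide_distrib)
  have KM: "Kf (2 * N + d) \<beta> = Kf (2 * N) \<beta> + of_int d * Dk (2 * N) \<beta>"
  proof (cases "d = 0")
    case False
    then have "d = 1" unfolding d_def by (auto split: if_splits)
    then show ?thesis using Kf_step[of "2 * N" \<beta>] N0 by simp
  qed simp
  have K2: "4 * Kf N \<beta> - Kf (2 * N) \<beta> = of_real (2 * (1 - cos (2 * pi * \<beta> * of_int N))) * Kf N \<beta>"
  proof -
    define A where "A = pi * \<beta> * of_int N"
    have e1: "pi * \<beta> * of_int (2 * N) = 2 * A" unfolding A_def by simp
    have e2: "2 * pi * \<beta> * of_int N = 2 * A" unfolding A_def by simp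
    have N20: "2 * N \<ge> 0" using N0 by simp
    have r: "4 * sin A ^ 2 - sin (2 * A) ^ 2 = 2 * (1 - cos (2 * A)) * sin A ^ 2"
    proof -
      have "cos A ^ 2 = 1 - sin A ^ 2" by (simp add: cos_squared_eq)
      then show ?thesis by (simp add: sin_double cos_double power_mult_distrib) (simp add: power2_eq_square algebra_simps)
    qed
    have "4 * Kf N \<beta> - Kf (2 * N) \<beta> = of_real ((4 * sin A ^ 2 - sin (2 * A) ^ 2) / sin (pi * \<beta>) ^ 2)"
      unfolding Kf_div[OF s N0] Kf_div[OF s N20] e1 A_def[symmetric] by (simp add: diff_divide_distrib)
    also have "\<dots> = of_real (2 * (1 - cos (2 * A))) * of_real (sin A ^ 2 / sin (pi * \<beta>) ^ 2)"
      unfolding r by simp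
    finally show ?thesis unfolding e2 Kf_div[OF s N0] A_def .
  qed
  have Sset: "(\<Sum>a\<in>{a::int. \<bar>of_int a\<bar> \<le> real h / real l}. of_int (N - \<bar>a\<bar>) * e (of_int a * \<beta>)) = Kf N \<beta>"
    unfolding set_floor Kf_def X_def[symmetric] N_def[symmetric] ..
  have E1: "E (real h / real l) \<beta> = Dk N \<beta>" unfolding E_Dk X_def[symmetric] N_def[symmetric] ..
  have E2: "E (2 * real h / real l) \<beta> = Dk (2 * N + d) \<beta>" unfolding E_Dk M ..
  have E3: "E (of_int (2 * N)) \<beta> = Dk (2 * N) \<beta>" unfolding E_Dk floor_of_int ..
  show "let N = \<lfloor>real h / real l\<rfloor>;
           M = \<lfloor>2 * real h / real l\<rfloor>;
           tail = of_real (4 * frac (real h / real l)) * E (real h / real l) \<beta>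
                  - of_real (frac (2 * real h / real l)) * E (2 * real h / real l) \<beta>;
           lhs = of_real (1 / real l) *
                   (\<Sum>\<^sub>\<infinity>a::int. of_real (W h (a * int l)) * e (of_int a * \<beta>));
           rhs1 = of_real ((4 * sin (pi * \<beta> * of_int N) ^ 2 - sin (pi * \<beta> * of_int M) ^ 2)
                           / sin (pi * \<beta>) ^ 2) + tail;
           rhs2 = of_real (2 * (1 - cos (2 * pi * \<beta> * of_int N))) *
                    (\<Sum>a\<in>{a::int. \<bar>of_int a\<bar> \<le> real h / real l}.
                        of_int (N - \<bar>a\<bar>) * e (of_int a * \<beta>))
                  - of_real (2 * frac (real h / real l) - frac (2 * real h / real l))
                      * E (of_int (2 * N)) \<beta>
                  + tail
       in lhs = rhs1 \<and> rhs1 = rhs2"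
    unfolding Let_def lhs
    unfolding X_def[symmetric] N_def[symmetric] f_def[symmetric] M g
    unfolding X_def Sset E1 E2 E3 K1 Qe
    unfolding KM K2[symmetric]
    by (simp add: algebra_simps)

qed


theorem lemma4:
  fixes h :: nat
  assumes "h \<ge> 1"
  shows
  "(\<forall>q::nat. q \<ge> 1 \<longrightarrow>
      (\<Sum>\<^sub>\<infinity>a\<in>{a::int. int q dvd a}. W h a) = 2 * real q * nint_dist (real h / real q))
 \<and> (\<forall>\<beta>::real. \<beta> \<notin> \<int> \<longrightarrow>
      (\<Sum>a\<in>{a::int. \<bar>a\<bar> \<le> 2 * int h}. of_real (W h a) * e (of_int a * \<beta>))
        = of_real (4 * sin (pi * real h * \<beta>) ^ 4 / sin (pi * \<beta>) ^ 2))
 \<and> (\<forall>(l::nat) (\<alpha>::real). l \<ge> 1 \<longrightarrow>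
      (\<Sum>\<^sub>\<infinity>b::int. of_real (W h (int l * b)) * e (of_int b * \<alpha>)) \<ge> 0)
 \<and> (\<forall>(l::nat) (\<beta>::real). l \<ge> 1 \<and> \<beta> \<notin> \<int> \<longrightarrow>
      (let N = \<lfloor>real h / real l\<rfloor>;
           M = \<lfloor>2 * real h / real l\<rfloor>;
           tail = of_real (4 * frac (real h / real l)) * E (real h / real l) \<beta>
                  - of_real (frac (2 * real h / real l)) * E (2 * real h / real l) \<beta>;
           lhs = of_real (1 / real l) *
                   (\<Sum>\<^sub>\<infinity>a::int. of_real (W h (a * int l)) * e (of_int a * \<beta>));
           rhs1 = of_real ((4 * sin (pi * \<beta> * of_int N) ^ 2 - sin (pi * \<beta> * of_int M) ^ 2)
                           / sin (pi * \<beta>) ^ 2) + tail;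
           rhs2 = of_real (2 * (1 - cos (2 * pi * \<beta> * of_int N))) *
                    (\<Sum>a\<in>{a::int. \<bar>of_int a\<bar> \<le> real h / real l}.
                        of_int (N - \<bar>a\<bar>) * e (of_int a * \<beta>))
                  - of_real (2 * frac (real h / real l) - frac (2 * real h / real l))
                      * E (of_int (2 * N)) \<beta>
                  + tail
       in lhs = rhs1 \<and> rhs1 = rhs2))"
  by (intro conjI part1 part2 part3 part4)

end
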